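(* For every integer $s\ge 3$ there exists $c>0$ such that for infinitely many positive integers $n$, there is a graph with $n$ vertices and with no stable set of size $s$ such that every clique cover of it has size at least $cn^{2-4/(s+1)}/(\log n)^2$.
   Context: All graphs are finite and simple. A clique $X$ of $G$ covers an edge $uv$ if $u,v\in X$; a clique cover of $G$ is a collection of cliques of $G$ that together cover all edges of $G$, and its size is the number of cliques in it. Logarithms are to base two. *)

theory Defs
  imports Complex_Main
begin

definition simple_graph :: "nat \<Rightarrow> (nat \<Rightarrow> nat \<Rightarrow> bool) \<Rightarrow> bool" where
  "simple_graph n E \<longleftrightarrow> (\<forall>u v. E u v \<longrightarrow> u < n \<and> v < n \<and> u \<noteq> v \<and> E v u)"

definition is_clique :: "nat \<Rightarrow> (nat \<Rightarrow> nat \<Rightarrow> bool) \<Rightarrow> nat set \<Rightarrow> bool" where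
  "is_clique n E X \<longleftrightarrow> X \<subseteq> {..<n} \<and> (\<forall>u\<in>X. \<forall>v\<in>X. u \<noteq> v \<longrightarrow> E u v)"

definition is_stable :: "nat \<Rightarrow> (nat \<Rightarrow> nat \<Rightarrow> bool) \<Rightarrow> nat set \<Rightarrow> bool" where
  "is_stable n E X \<longleftrightarrow> X \<subseteq> {..<n} \<and> (\<forall>u\<in>X. \<forall>v\<in>X. \<not> E u v)"

definition clique_cover :: "nat \<Rightarrow> (nat \<Rightarrow> nat \<Rightarrow> bool) \<Rightarrow> nat set set \<Rightarrow> bool" where
  "clique_cover n E C \<longleftrightarrow> (\<forall>X\<in>C. is_clique n E X) \<and>
     (\<forall>u v. E u v \<longrightarrow> (\<exists>X\<in>C. u \<in> X \<and> v \<in> X))"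

end

theory Submission
  imports Defs "HOL-Probability.Product_PMF"
begin


lemma two_choose2: "2 * (m choose 2) = m * (m - 1)"
proof (induction m)
  case 0 then show ?case by simp
next
  case (Suc m)
  have "(Suc m) choose 2 = (m choose 1) + (m choose 2)" by (simp add: numeral_2_eq_2)
  then have "2 * ((Suc m) choose 2) = 2 * m + m * (m - 1)" using Suc by simp
  also have "\<dots> = Suc m * (Suc m - 1)" by (cases m) (auto simp: algebra_simps)
  finally show ?case .
qed

lemma real_choose2: "real (m choose 2) = real m * (real m - 1) / 2"
proof -
  have "real (2 * (m choose 2)) = real (m * (m - 1))" by (simp only: two_choose2)
  then show ?thesis by (cases m) (auto simp: algebra_simps)
qed

lemma choose_le_pow': "n choose k \<le> n ^ k"
  by (cases "k \<le> n") (auto simp: binomial_le_pow binomial_eq_0)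

lemma exp_comb: "exp (U::real) * (2 * exp (- V)) = 2 * exp (U - V)"
proof -
  have "exp (U - V) = exp U * exp (- V)" using exp_add[of U "-V"] by simp
  then show ?thesis by simp
qed

lemma exp2_ge4: "4 \<le> exp (2::real)"
proof -
  have "2 \<le> exp (1::real)" using exp_ge_add_one_self[of 1] by simp
  then have "2 * 2 \<le> exp (1::real) * exp 1" by (intro mult_mono) auto
  then show ?thesis by (simp add: exp_add[symmetric])
qed

lemma one_minus_ge_exp: assumes "0 \<le> z" "z \<le> 1/2" shows "exp (-2 * z) \<le> 1 - (z::real)"
proof -
  have "- z - 2 * z\<^sup>2 \<le> ln (1 - z)" by (rule ln_one_minus_pos_lower_bound) (use assms in auto)
  moreover have "z * (2 * z) \<le> z * 1" using assms by (intro mult_left_mono) auto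
  then have "-2 * z \<le> - z - 2 * z\<^sup>2" by (simp add: power2_eq_square algebra_simps)
  ultimately have "-2 * z \<le> ln (1 - z)" by linarith
  then have "exp (-2 * z) \<le> exp (ln (1 - z))" by simp
  also have "\<dots> = 1 - z" using assms by simp
  finally show ?thesis .
qed

lemma pow_ge_exp: assumes "0 \<le> z" "z \<le> 1/2" shows "exp (-2 * z * real m) \<le> (1 - (z::real)) ^ m"
proof -
  have "exp (-2 * z * real m) = exp (-2 * z) ^ m" by (simp add: exp_of_nat_mult[symmetric] mult.commute)
  also have "\<dots> \<le> (1 - z) ^ m" by (rule power_mono[OF one_minus_ge_exp]) (use assms in auto)
  finally show ?thesis .
qed

lemma pow_le_exp: assumes "0 \<le> z" "z \<le> 1" shows "(1 - (z::real)) ^ m \<le> exp (- z * real m)"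
proof -
  have "(1 - z) ^ m \<le> exp (- z) ^ m"
    by (rule power_mono) (use assms exp_ge_add_one_self[of "-z"] in auto)
  also have "\<dots> = exp (- z * real m)" by (simp add: exp_of_nat_mult[symmetric] mult.commute)
  finally show ?thesis .
qed

lemma bern: assumes "0 \<le> z" "z \<le> 1" shows "1 - real m * z \<le> (1 - (z::real)) ^ m"
  using Bernoulli_inequality[of "-z" m] assms by simp



lemma numeric:
  fixes s j :: nat
  assumes s3: "s \<ge> 3" and j1: "j \<ge> 1"
  defines "k \<equiv> (2::nat) ^ j"
  defines "n \<equiv> (2::nat) ^ ((s + 1) * j)"
  defines "a \<equiv> 4 * s ^ 2"
  defines "p \<equiv> 1 / (real a * real k ^ 2)"
  defines "t \<equiv> 8 * a * k ^ 2 * (s + 1) * j"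
  defines "x \<equiv> 4 * p ^ (s choose 2)"
  defines "y \<equiv> 2 * exp (- p * real (t choose 2) / 2)"
  shows "0 \<le> p \<and> p \<le> 1 \<and> 0 \<le> x \<and> x < 1 \<and> 0 \<le> y \<and> y < 1 \<and> s \<noteq> t \<and> t \<ge> 2 \<and>
    p ^ (s choose 2) \<le> x * (1 - x) ^ ((s choose 2) * n ^ (s - 2)) * (1 - y) ^ (n choose t) \<and>
    (1 - p) ^ (t choose 2) \<le> y * (1 - x) ^ ((t choose 2) * n ^ (s - 2)) * (1 - y) ^ (n choose t)"
proof -
  define q where "q = s choose 2"
  have hq: "2 * q = s * (s - 1)" unfolding q_def by (rule two_choose2)
  have q3: "q \<ge> 3"
  proof -
    have "s * (s - 1) \<ge> 3 * 2" using s3 by (intro mult_mono) auto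
    then show ?thesis using hq by linarith
  qed
  have k2: "k \<ge> 2"
  proof -
    have "(2::nat) ^ 1 \<le> 2 ^ j" by (rule power_increasing[OF j1]) simp
    then show ?thesis unfolding k_def by simp
  qed
  define K2 where "K2 = real k ^ 2"
  have K2ge: "K2 \<ge> 4"
  proof -
    have "real k \<ge> 2" using k2 by simp
    then have "real k ^ 2 \<ge> 2 ^ 2" by (intro power_mono) auto
    then show ?thesis unfolding K2_def by simp
  qed
  define A where "A = real a"
  have Age: "A \<ge> 36"
  proof -
    have "real s ^ 2 \<ge> 3 ^ 2" using s3 by (intro power_mono) auto
    then show ?thesis unfolding A_def a_def by simp
  qed
  have A8q: "8 * real q \<le> A"
  proof -
    have "8 * q = 4 * (s * (s - 1))" using hq by simp
    also have "\<dots> \<le> 4 * s ^ 2" by (simp add: power2_eq_square)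
    finally have "real (8 * q) \<le> real (4 * s ^ 2)" by (simp only: of_nat_le_iff)
    then show ?thesis unfolding A_def a_def by simp
  qed
  have pdef: "p = 1 / (A * K2)" unfolding p_def A_def K2_def by simp
  have p0: "0 < p" unfolding pdef using Age K2ge by simp
  have p1: "p \<le> 1 / 144"
  proof -
    have "36 * 4 \<le> A * K2" using Age K2ge by (intro mult_mono) auto
    then have "144 \<le> A * K2" by simp
    then show ?thesis unfolding pdef by (simp add: field_simps)
  qed
  have nk: "n = k ^ (s + 1)" unfolding n_def k_def by (simp only: power_mult[symmetric] mult.commute)
  have expo: "(s + 1) * (s - 2) + 2 = 2 * q"
  proof -
    define m where "m = s - 2"
    have "s = m + 2" using s3 unfolding m_def by simp
    then show ?thesis using hq by (simp add: algebra_simps)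
  qed
  have hn: "real (n ^ (s - 2)) * K2 = K2 ^ q"
  proof -
    have "n ^ (s - 2) * k ^ 2 = k ^ ((s + 1) * (s - 2) + 2)" unfolding nk by (simp only: power_mult[symmetric] power_add[symmetric])
    also have "\<dots> = (k ^ 2) ^ q" unfolding expo by (simp add: power_mult)
    finally have "real (n ^ (s - 2) * k ^ 2) = real ((k ^ 2) ^ q)" by simp
    then show ?thesis unfolding K2_def by simp
  qed
  have hnp: "real (n ^ (s - 2)) * p ^ q = 1 / (A ^ q * K2)"
  proof -
    have "p ^ q = 1 / (A ^ q * K2 ^ q)" unfolding pdef by (simp add: power_divide power_mult_distrib)
    moreover have "real (n ^ (s - 2)) = K2 ^ q / K2" using hn K2ge by (simp add: field_simps)
    ultimately have "real (n ^ (s - 2)) * p ^ q = (K2 ^ q / K2) * (1 / (A ^ q * K2 ^ q))" by simp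
    also have "\<dots> = 1 / (A ^ q * K2)"
    proof -
      have "K2 ^ q > 0" "A ^ q > 0" using K2ge Age by auto
      then show ?thesis using K2ge by (simp add: field_simps)
    qed
    finally show ?thesis .
  qed
  have Aq: "A ^ q \<ge> 16 * A"
  proof -
    have "A ^ q \<ge> A ^ 3" by (rule power_increasing[OF q3]) (use Age in auto)
    moreover have "A ^ 3 = A * A * A" by (simp add: power3_eq_cube)
    moreover have "A * A \<ge> 4 * 4" using Age by (intro mult_mono) auto
    moreover have "A * A * A \<ge> 16 * A" using \<open>A * A \<ge> 4 * 4\<close> Age by (intro mult_right_mono) auto
    ultimately show ?thesis by simp
  qed
  have xq: "x = 4 * p ^ q" unfolding x_def q_def ..
  have x0: "0 \<le> x" unfolding xq using p0 by simp
  have pqp: "p ^ q \<le> p"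
  proof -
    have "p ^ q \<le> p ^ 1" by (rule power_decreasing) (use p0 p1 q3 in auto)
    then show ?thesis by simp
  qed
  have xhalf: "x \<le> 1/2" unfolding xq using pqp p1 by linarith
  define Ct where "Ct = real (t choose 2)"
  have Ctdef: "Ct = real t * (real t - 1) / 2" unfolding Ct_def by (rule real_choose2)
  have pt: "p * real t = 8 * (real s + 1) * real j"
  proof -
    have tr: "real t = 8 * A * K2 * (real s + 1) * real j" unfolding t_def A_def K2_def by (simp add: algebra_simps)
    have "A > 0" "K2 > 0" using Age K2ge by auto
    then show ?thesis unfolding pdef tr by (simp add: field_simps)
  qed
  have t4: "t \<ge> 4"
  proof -
    have "a \<ge> 1" using Age A_def by simp
    moreover have "k ^ 2 \<ge> 1" using k2 by simp
    ultimately have "8 * a * k ^ 2 * (s + 1) * j \<ge> 8 * 1 * 1 * 1 * 1" using j1 by (intro mult_mono) auto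
    then show ?thesis unfolding t_def by simp
  qed
  have st: "s \<noteq> t"
  proof -
    have "a \<ge> 1" using Age A_def by simp
    moreover have "k ^ 2 \<ge> 1" using k2 by simp
    ultimately have "8 * a * k ^ 2 * (s + 1) * j \<ge> 8 * 1 * 1 * (s + 1) * 1" using j1 by (intro mult_mono) auto
    then show ?thesis unfolding t_def by simp
  qed
  have pCt: "p * Ct / 2 = 2 * (real s + 1) * real j * (real t - 1)"
  proof -
    have "p * Ct / 2 = (p * real t) * (real t - 1) / 4" unfolding Ctdef by (simp add: algebra_simps)
    also have "\<dots> = 8 * (real s + 1) * real j * (real t - 1) / 4" unfolding pt ..
    also have "\<dots> = 2 * (real s + 1) * real j * (real t - 1)" by (simp add: field_simps)
    finally show ?thesis .
  qed
  have L: "(real s + 1) * real j * real t - p * Ct / 2 \<le> -2"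
  proof -
    have "(real s + 1) * real j \<ge> 4 * 1" using s3 j1 by (intro mult_mono) auto
    then have "(real s + 1) * real j \<ge> 4" by simp
    moreover have "real t \<ge> 4" using t4 by simp
    ultimately have "(real s + 1) * real j * real t \<ge> (real s + 1) * real j * 4"
      by (intro mult_left_mono) auto
    then show ?thesis unfolding pCt using \<open>(real s + 1) * real j \<ge> 4\<close> by (simp add: algebra_simps)
  qed
  have e2: "exp (-2::real) \<le> 1/4" using exp2_ge4 by (simp add: exp_minus field_simps)
  have y0: "0 \<le> y" unfolding y_def by simp
  have ydef: "y = 2 * exp (- (p * Ct / 2))" unfolding y_def Ct_def by simp
  have yhalf: "y \<le> 1/2"
  proof -
    have "p * Ct / 2 \<ge> 2" using L p0 s3 j1 t4
      by (smt (verit, ccfv_SIG) mult_nonneg_nonneg of_nat_0_le_iff)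
    then have "exp (- (p * Ct / 2)) \<le> exp (-2)" by simp
    then show ?thesis unfolding ydef using e2 by linarith
  qed
  have nexp: "real n \<le> exp ((real s + 1) * real j)"
  proof -
    have "real n = 2 ^ ((s + 1) * j)" unfolding n_def by simp
    also have "\<dots> \<le> exp 1 ^ ((s + 1) * j)" by (rule power_mono) (use exp_ge_add_one_self[of 1] in auto)
    also have "\<dots> = exp ((real s + 1) * real j)" by (simp add: exp_of_nat_mult[symmetric] algebra_simps)
    finally show ?thesis .
  qed
  have Cy: "real (n choose t) * y \<le> 1/2"
  proof -
    have "real (n choose t) \<le> real n ^ t" using choose_le_pow'[of n t]
      by (metis of_nat_le_iff of_nat_power)
    also have "\<dots> \<le> exp ((real s + 1) * real j) ^ t" by (rule power_mono[OF nexp]) simp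
    also have "\<dots> = exp ((real s + 1) * real j * real t)" by (simp add: exp_of_nat_mult[symmetric] mult.commute)
    finally have c1: "real (n choose t) \<le> exp ((real s + 1) * real j * real t)" .
    have "real (n choose t) * y \<le> exp ((real s + 1) * real j * real t) * (2 * exp (- (p * Ct / 2)))"
      unfolding ydef by (rule mult_right_mono[OF c1]) simp
    also have "\<dots> = 2 * exp ((real s + 1) * real j * real t - p * Ct / 2)" by (rule exp_comb)
    also have "\<dots> \<le> 2 * exp (-2)" using L by simp
    also have "\<dots> \<le> 1/2" using e2 by simp
    finally show ?thesis .
  qed
  have Y: "(1 - y) ^ (n choose t) \<ge> 1/2"
    using bern[of y "n choose t"] y0 yhalf Cy by linarith
  have X1: "(1 - x) ^ (q * n ^ (s - 2)) \<ge> 1/2"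
  proof -
    have "real (q * n ^ (s - 2)) * x = 4 * real q * (real (n ^ (s - 2)) * p ^ q)" unfolding xq by simp
    also have "\<dots> = 4 * real q / (A ^ q * K2)" unfolding hnp by simp
    also have "\<dots> \<le> 4 * real q / A"
    proof -
      have "A ^ q * 1 \<le> A ^ q * K2" using K2ge Age by (intro mult_left_mono) auto
      then have "A \<le> A ^ q * K2" using Aq Age by linarith
      then show ?thesis using Age by (intro divide_left_mono) auto
    qed
    also have "\<dots> \<le> 1/2" using A8q Age by (simp add: field_simps)
    finally have "real (q * n ^ (s - 2)) * x \<le> 1/2" .
    then show ?thesis using bern[of x "q * n ^ (s - 2)"] x0 xhalf by linarith
  qed
  have H2: "p ^ q \<le> x * (1 - x) ^ (q * n ^ (s - 2)) * (1 - y) ^ (n choose t)"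
  proof -
    have "x * (1/2) * (1/2) \<le> x * (1 - x) ^ (q * n ^ (s - 2)) * (1 - y) ^ (n choose t)"
      using X1 Y x0 by (intro mult_mono) auto
    then show ?thesis unfolding xq by simp
  qed
  have H3: "(1 - p) ^ (t choose 2) \<le> y * (1 - x) ^ ((t choose 2) * n ^ (s - 2)) * (1 - y) ^ (n choose t)"
  proof -
    have lhs: "(1 - p) ^ (t choose 2) \<le> exp (- p * Ct)"
      unfolding Ct_def by (rule pow_le_exp) (use p0 p1 in auto)
    have "2 * x * real ((t choose 2) * n ^ (s - 2)) = 8 * Ct * (real (n ^ (s - 2)) * p ^ q)"
      unfolding xq Ct_def by simp
    also have "\<dots> = 8 * Ct / (A ^ q * K2)" unfolding hnp by simp
    also have "\<dots> \<le> 8 * Ct / (16 * A * K2)"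
    proof -
      have "16 * A * K2 \<le> A ^ q * K2" using Aq K2ge by simp
      moreover have "Ct \<ge> 0" unfolding Ct_def by simp
      ultimately show ?thesis using Age K2ge by (intro divide_left_mono) auto
    qed
    also have "\<dots> = p * Ct / 2" unfolding pdef using Age K2ge by (simp add: field_simps)
    finally have xe: "2 * x * real ((t choose 2) * n ^ (s - 2)) \<le> p * Ct / 2" .
    have "exp (- (p * Ct / 2)) \<le> exp (-2 * x * real ((t choose 2) * n ^ (s - 2)))" using xe by simp
    also have "\<dots> \<le> (1 - x) ^ ((t choose 2) * n ^ (s - 2))" by (rule pow_ge_exp) (use x0 xhalf in auto)
    finally have X2: "exp (- (p * Ct / 2)) \<le> (1 - x) ^ ((t choose 2) * n ^ (s - 2))" .
    have "exp (- p * Ct) = y * exp (- (p * Ct / 2)) * (1/2)"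
      unfolding ydef by (simp add: exp_add[symmetric])
    also have "\<dots> \<le> y * (1 - x) ^ ((t choose 2) * n ^ (s - 2)) * (1 - y) ^ (n choose t)"
      using X2 Y y0 x0 xhalf by (intro mult_mono) auto
    finally show ?thesis using lhs by linarith
  qed
  show ?thesis using p0 p1 x0 xhalf y0 yhalf st t4 H2 H3 unfolding q_def by auto
qed



definition noev :: "('i \<Rightarrow> 'a set) \<Rightarrow> 'i set \<Rightarrow> 'a set" where
  "noev A J = {w. \<forall>j\<in>J. w \<notin> A j}"

lemma LLL_aux:
  fixes M :: "'a pmf" and A :: "'i \<Rightarrow> 'a set" and G :: "'i \<Rightarrow> 'i set" and x :: "'i \<Rightarrow> real"
  assumes fin: "finite I"
    and indep: "\<And>i J. i \<in> I \<Longrightarrow> J \<subseteq> I - G i - {i} \<Longrightarrow>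
        measure_pmf.prob M (A i \<inter> noev A J) \<le> measure_pmf.prob M (A i) * measure_pmf.prob M (noev A J)"
    and xb: "\<And>i. i \<in> I \<Longrightarrow> 0 \<le> x i \<and> x i \<le> 1"
    and pb: "\<And>i. i \<in> I \<Longrightarrow> measure_pmf.prob M (A i) \<le> x i * (\<Prod>j\<in>G i \<inter> I. 1 - x j)"
  shows "\<forall>S. S \<subseteq> I \<longrightarrow> card S = m \<longrightarrow>
     (\<forall>i\<in>I - S. measure_pmf.prob M (A i \<inter> noev A S) \<le> x i * measure_pmf.prob M (noev A S)) \<and>
     (\<forall>R\<subseteq>S. measure_pmf.prob M (noev A S) \<ge> (\<Prod>j\<in>S - R. 1 - x j) * measure_pmf.prob M (noev A R))"
proof (induction m rule: less_induct)
  case (less m)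
  let ?P = "measure_pmf.prob M"
  show ?case
  proof (intro allI impI)
    fix S assume SI: "S \<subseteq> I" and cS: "card S = m"
    have finS: "finite S" using SI fin finite_subset by blast
    have IH: "\<And>S'. S' \<subset> S \<Longrightarrow>
     (\<forall>i\<in>I - S'. ?P (A i \<inter> noev A S') \<le> x i * ?P (noev A S')) \<and>
     (\<forall>R\<subseteq>S'. ?P (noev A S') \<ge> (\<Prod>j\<in>S' - R. 1 - x j) * ?P (noev A R))"
    proof -
      fix S' assume "S' \<subset> S"
      then have "card S' < m" using cS finS psubset_card_mono by blast
      then show "?thesis S'" using less[of "card S'"] \<open>S' \<subset> S\<close> SI by blast
    qed
    have B: "?P (noev A S) \<ge> (\<Prod>j\<in>S - R. 1 - x j) * ?P (noev A R)" if RS: "R \<subseteq> S" for R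
    proof (cases "R = S")
      case True then show ?thesis by simp
    next
      case False
      then obtain j where j: "j \<in> S" "j \<notin> R" using RS by blast
      define S' where "S' = S - {j}"
      have S'S: "S' \<subset> S" using j S'_def by blast
      have RS': "R \<subseteq> S'" using RS j S'_def by blast
      have jI: "j \<in> I - S'" using j SI S'_def by blast
      have IH1: "?P (A j \<inter> noev A S') \<le> x j * ?P (noev A S')" using IH[OF S'S] jI by blast
      have IH2: "?P (noev A S') \<ge> (\<Prod>i\<in>S' - R. 1 - x i) * ?P (noev A R)" using IH[OF S'S] RS' by blast
      have eq: "noev A S = noev A S' - (A j \<inter> noev A S')"
        using j unfolding S'_def noev_def by auto
      have "?P (noev A S) = ?P (noev A S') - ?P (A j \<inter> noev A S')"
        unfolding eq by (subst measure_pmf.finite_measure_Diff) auto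
      also have "\<dots> \<ge> (1 - x j) * ?P (noev A S')" using IH1 by (simp add: algebra_simps)
      finally have 1: "?P (noev A S) \<ge> (1 - x j) * ?P (noev A S')" .
      have x01: "0 \<le> 1 - x j" using xb[of j] jI by auto
      have "(1 - x j) * ?P (noev A S') \<ge> (1 - x j) * ((\<Prod>i\<in>S' - R. 1 - x i) * ?P (noev A R))"
        using IH2 x01 by (simp add: mult_left_mono)
      moreover have "S - R = insert j (S' - R)" using j S'_def RS by auto
      moreover have "finite (S' - R)" using finS S'_def by auto
      moreover have "j \<notin> S' - R" using S'_def by auto
      ultimately show ?thesis using 1 by (simp add: mult.assoc)
    qed
    have Aa: "?P (A i \<inter> noev A S) \<le> x i * ?P (noev A S)" if iI: "i \<in> I - S" for i
    proof -
      define S2 where "S2 = S - G i"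
      have sub: "A i \<inter> noev A S \<subseteq> A i \<inter> noev A S2" unfolding noev_def S2_def by auto
      have "?P (A i \<inter> noev A S) \<le> ?P (A i \<inter> noev A S2)"
        using sub by (simp add: measure_pmf.finite_measure_mono)
      also have "\<dots> \<le> ?P (A i) * ?P (noev A S2)"
        using indep[of i S2] iI SI S2_def by blast
      also have "\<dots> \<le> x i * (\<Prod>j\<in>G i \<inter> I. 1 - x j) * ?P (noev A S2)"
        using pb[of i] iI by (simp add: mult_right_mono)
      also have "\<dots> \<le> x i * (\<Prod>j\<in>S - S2. 1 - x j) * ?P (noev A S2)"
      proof -
        have fG: "finite (G i \<inter> I)" using fin by auto
        have sub2: "S - S2 \<subseteq> G i \<inter> I" using S2_def SI by auto
        have "(\<Prod>j\<in>G i \<inter> I. 1 - x j) = (\<Prod>j\<in>S - S2. 1 - x j) * (\<Prod>j\<in>(G i \<inter> I) - (S - S2). 1 - x j)"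
          using prod.subset_diff[OF sub2 fG] by (simp add: mult.commute)
        moreover have "(\<Prod>j\<in>(G i \<inter> I) - (S - S2). 1 - x j) \<le> 1"
          by (rule prod_le_1) (use xb in auto)
        moreover have "0 \<le> (\<Prod>j\<in>S - S2. 1 - x j)"
          by (rule prod_nonneg) (use xb SI in auto)
        ultimately have "(\<Prod>j\<in>G i \<inter> I. 1 - x j) \<le> (\<Prod>j\<in>S - S2. 1 - x j)"
          by (simp add: mult_left_le)
        moreover have "0 \<le> x i" using xb iI by auto
        ultimately show ?thesis
          by (intro mult_right_mono mult_left_mono) auto
      qed
      also have "\<dots> \<le> x i * ?P (noev A S)"
        using B[of S2] S2_def xb[of i] iI by (auto simp: mult.assoc intro!: mult_left_mono)
      finally show ?thesis .
    qed
    show "(\<forall>i\<in>I - S. ?P (A i \<inter> noev A S) \<le> x i * ?P (noev A S)) \<and>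
     (\<forall>R\<subseteq>S. ?P (noev A S) \<ge> (\<Prod>j\<in>S - R. 1 - x j) * ?P (noev A R))"
      using Aa B by blast
  qed
qed

lemma LLL:
  fixes M :: "'a pmf" and A :: "'i \<Rightarrow> 'a set" and G :: "'i \<Rightarrow> 'i set" and x :: "'i \<Rightarrow> real"
  assumes fin: "finite I"
    and indep: "\<And>i J. i \<in> I \<Longrightarrow> J \<subseteq> I - G i - {i} \<Longrightarrow>
        measure_pmf.prob M (A i \<inter> noev A J) \<le> measure_pmf.prob M (A i) * measure_pmf.prob M (noev A J)"
    and xb: "\<And>i. i \<in> I \<Longrightarrow> 0 \<le> x i \<and> x i < 1"
    and pb: "\<And>i. i \<in> I \<Longrightarrow> measure_pmf.prob M (A i) \<le> x i * (\<Prod>j\<in>G i \<inter> I. 1 - x j)"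
  shows "noev A I \<noteq> {}"
proof -
  have xb': "\<And>i. i \<in> I \<Longrightarrow> 0 \<le> x i \<and> x i \<le> 1" using xb by fastforce
  have "measure_pmf.prob M (noev A I) \<ge> (\<Prod>j\<in>I - {}. 1 - x j) * measure_pmf.prob M (noev A {})"
    using LLL_aux[OF fin indep xb' pb, of "card I"] by blast
  moreover have "noev A {} = UNIV" by (simp add: noev_def)
  moreover have "(\<Prod>j\<in>I. 1 - x j) > 0" by (rule prod_pos) (use xb in auto)
  ultimately have "measure_pmf.prob M (noev A I) > 0" by simp
  then show ?thesis by auto
qed



lemma pair_prob_product:
  "measure_pmf.prob (pair_pmf M N) (X \<times> Y) = measure_pmf.prob M X * measure_pmf.prob N Y"
proof -
  have "measure_pmf.prob (pair_pmf M N) (X \<times> Y) = measure_pmf.prob (pair_pmf M N) ((X \<times> Y) \<inter> set_pmf (pair_pmf M N))"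
    using measure_Int_set_pmf[of "pair_pmf M N" "X \<times> Y"] by simp
  also have "(X \<times> Y) \<inter> set_pmf (pair_pmf M N) = (X \<inter> set_pmf M) \<times> (Y \<inter> set_pmf N)" by auto
  also have "measure_pmf.prob (pair_pmf M N) \<dots> = measure_pmf.prob M (X \<inter> set_pmf M) * measure_pmf.prob N (Y \<inter> set_pmf N)"
    by (rule measure_pmf_prob_product) (auto intro: countable_subset)
  finally show ?thesis by (simp add: measure_Int_set_pmf)
qed

lemma Pi_indep:
  assumes fin: "finite K" and K1: "K1 \<subseteq> K"
    and X: "\<And>f g. (\<forall>e\<in>K1. f e = g e) \<Longrightarrow> f \<in> X \<longleftrightarrow> g \<in> X"
    and Y: "\<And>f g. (\<forall>e. e \<notin> K1 \<longrightarrow> f e = g e) \<Longrightarrow> f \<in> Y \<longleftrightarrow> g \<in> Y"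
  shows "measure_pmf.prob (Pi_pmf K d q) (X \<inter> Y) =
     measure_pmf.prob (Pi_pmf K d q) X * measure_pmf.prob (Pi_pmf K d q) Y"
proof -
  define h where "h = (\<lambda>(f::'a \<Rightarrow> 'b, g::'a \<Rightarrow> 'b) x. if x \<in> K1 then f x else g x)"
  have KK: "K = K1 \<union> (K - K1)" using K1 by auto
  have M: "Pi_pmf K d q = map_pmf h (pair_pmf (Pi_pmf K1 d q) (Pi_pmf (K - K1) d q))"
    unfolding h_def by (subst KK, rule Pi_pmf_union) (use fin K1 finite_subset in auto)
  have hX: "h -` X = X \<times> UNIV"
  proof -
    have "h (f, g) \<in> X \<longleftrightarrow> f \<in> X" for f g by (rule X) (auto simp: h_def)
    then show ?thesis by auto
  qed
  have hY: "h -` Y = UNIV \<times> Y"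
  proof -
    have "h (f, g) \<in> Y \<longleftrightarrow> g \<in> Y" for f g by (rule Y) (auto simp: h_def)
    then show ?thesis by auto
  qed
  have hXY: "h -` (X \<inter> Y) = X \<times> Y" using hX hY by auto
  show ?thesis
    unfolding M measure_map_pmf hX hY hXY pair_prob_product by simp
qed

lemma Pi_all:
  assumes fin: "finite K" and P: "P \<subseteq> K"
  shows "measure_pmf.prob (Pi_pmf K d q) {f. \<forall>e\<in>P. f e = b} = (\<Prod>e\<in>P. pmf (q e) b)"
proof -
  have "{f. \<forall>e\<in>P. f e = b} = Pi K (\<lambda>e. if e \<in> P then {b} else UNIV)"
    using P by (auto simp: Pi_def)
  then have "measure_pmf.prob (Pi_pmf K d q) {f. \<forall>e\<in>P. f e = b} =
     (\<Prod>e\<in>K. measure_pmf.prob (q e) (if e \<in> P then {b} else UNIV))"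
    using measure_Pi_pmf_Pi[OF fin] by simp
  also have "\<dots> = (\<Prod>e\<in>K. if e \<in> P then pmf (q e) b else 1)"
    by (intro prod.cong) (auto simp: measure_pmf_single)
  also have "\<dots> = (\<Prod>e\<in>P. pmf (q e) b)"
    using fin P by (simp add: prod.If_cases Int_absorb1)
  finally show ?thesis .
qed



definition pairs :: "nat set \<Rightarrow> nat set set" where
  "pairs X = {e. e \<subseteq> X \<and> card e = 2}"


lemma card_pairs: "finite X \<Longrightarrow> card (pairs X) = card X choose 2"
  unfolding pairs_def by (rule n_subsets)

lemma pairs_mono: "X \<subseteq> Y \<Longrightarrow> pairs X \<subseteq> pairs Y"
  unfolding pairs_def by auto

lemma pairs_disj: "finite X \<Longrightarrow> card (X \<inter> Y) < 2 \<Longrightarrow> pairs X \<inter> pairs Y = {}"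
proof (rule ccontr)
  assume f: "finite X" and c: "card (X \<inter> Y) < 2" and "pairs X \<inter> pairs Y \<noteq> {}"
  then obtain e where "e \<subseteq> X \<inter> Y" "card e = 2" unfolding pairs_def by auto
  then have "card e \<le> card (X \<inter> Y)" using f by (intro card_mono) auto
  then show False using c \<open>card e = 2\<close> by simp
qed

lemma card_nbrs:
  assumes X: "finite X" and s2: "s \<ge> 2"
  shows "card {Y. Y \<subseteq> {..<n} \<and> card Y = s \<and> 2 \<le> card (X \<inter> Y)} \<le> (card X choose 2) * n ^ (s - 2)"
proof -
  let ?Z = "{Z. Z \<subseteq> {..<n} \<and> card Z = s - 2}"
  have sub: "{Y. Y \<subseteq> {..<n} \<and> card Y = s \<and> 2 \<le> card (X \<inter> Y)} \<subseteq> (\<Union>e\<in>pairs X. (\<lambda>Z. e \<union> Z) ` ?Z)"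
  proof
    fix Y assume "Y \<in> {Y. Y \<subseteq> {..<n} \<and> card Y = s \<and> 2 \<le> card (X \<inter> Y)}"
    then have Y: "Y \<subseteq> {..<n}" "card Y = s" "2 \<le> card (X \<inter> Y)" by auto
    obtain e where e: "e \<subseteq> X \<inter> Y" "card e = 2" using Y(3) by (meson obtain_subset_with_card_n)
    have fY: "finite Y" using Y(1) finite_subset by blast
    have fe: "finite e" using e(2) by (simp add: card_ge_0_finite)
    have "card (Y - e) = s - 2" using e Y fe by (subst card_Diff_subset) auto
    moreover have "Y = e \<union> (Y - e)" using e by auto
    moreover have "Y - e \<subseteq> {..<n}" using Y by auto
    moreover have "e \<in> pairs X" using e unfolding pairs_def by auto
    ultimately show "Y \<in> (\<Union>e\<in>pairs X. (\<lambda>Z. e \<union> Z) ` ?Z)" by blast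
  qed
  have fp: "finite (pairs X)" using X unfolding pairs_def by auto
  have fZ: "finite ?Z" by (rule finite_subset[of _ "Pow {..<n}"]) auto
  have "card {Y. Y \<subseteq> {..<n} \<and> card Y = s \<and> 2 \<le> card (X \<inter> Y)} \<le> card (\<Union>e\<in>pairs X. (\<lambda>Z. e \<union> Z) ` ?Z)"
    by (rule card_mono[OF _ sub]) (use fp fZ in auto)
  also have "\<dots> \<le> (\<Sum>e\<in>pairs X. card ((\<lambda>Z. e \<union> Z) ` ?Z))" by (rule card_UN_le[OF fp])
  also have "\<dots> \<le> (\<Sum>e\<in>pairs X. n ^ (s - 2))"
  proof (rule sum_mono)
    fix e
    have "card ((\<lambda>Z. e \<union> Z) ` ?Z) \<le> card ?Z" by (rule card_image_le[OF fZ])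
    also have "card ?Z = n choose (s - 2)" using n_subsets[of "{..<n}" "s - 2"] by simp
    also have "\<dots> \<le> n ^ (s - 2)" by (rule choose_le_pow')
    finally show "card ((\<lambda>Z. e \<union> Z) ` ?Z) \<le> n ^ (s - 2)" .
  qed
  also have "\<dots> = (card X choose 2) * n ^ (s - 2)" using card_pairs[OF X] by simp
  finally show ?thesis .
qed

lemma random_graph_exists:
  fixes n s t :: nat and p x y :: real
  assumes p01: "0 \<le> p" "p \<le> 1" and x01: "0 \<le> x" "x < 1" and y01: "0 \<le> y" "y < 1"
    and st: "s \<noteq> t" and s2: "s \<ge> 2" and t2: "t \<ge> 2"
    and H2: "p ^ (s choose 2) \<le> x * (1 - x) ^ ((s choose 2) * n ^ (s - 2)) * (1 - y) ^ (n choose t)"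
    and H3: "(1 - p) ^ (t choose 2) \<le> y * (1 - x) ^ ((t choose 2) * n ^ (s - 2)) * (1 - y) ^ (n choose t)"
  shows "\<exists>w::nat set \<Rightarrow> bool.
     (\<forall>X. X \<subseteq> {..<n} \<longrightarrow> card X = s \<longrightarrow> \<not> (\<forall>e\<in>pairs X. w e)) \<and>
     (\<forall>X. X \<subseteq> {..<n} \<longrightarrow> card X = t \<longrightarrow> \<not> (\<forall>e\<in>pairs X. \<not> w e))"
proof -
  define K where "K = pairs {..<n}"
  define M where "M = Pi_pmf K False (\<lambda>_. bernoulli_pmf p)"
  define I where "I = {X. X \<subseteq> {..<n} \<and> card X = s} \<union> {X. X \<subseteq> {..<n} \<and> card X = t}"
  define ev where "ev X = (if card X = s then {f::nat set \<Rightarrow> bool. \<forall>e\<in>pairs X. f e = True}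
                           else {f. \<forall>e\<in>pairs X. f e = False})" for X :: "nat set"
  define G where "G X = {Y::nat set. 2 \<le> card (X \<inter> Y)}" for X :: "nat set"
  define xv where "xv X = (if card X = s then x else y)" for X :: "nat set"
  have finK: "finite K" unfolding K_def pairs_def
    by (rule finite_subset[of _ "Pow {..<n}"]) auto
  have finI: "finite I" unfolding I_def by (rule finite_subset[of _ "Pow {..<n}"]) auto
  have ev_dep: "\<And>X f g. (\<forall>e\<in>pairs X. f e = g e) \<Longrightarrow> f \<in> ev X \<longleftrightarrow> g \<in> ev X"
    unfolding ev_def by auto
  have indep: "measure_pmf.prob M (ev X \<inter> noev ev J) \<le> measure_pmf.prob M (ev X) * measure_pmf.prob M (noev ev J)"
    if XI: "X \<in> I" and J: "J \<subseteq> I - G X - {X}" for X J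
  proof -
    have Xn: "X \<subseteq> {..<n}" using XI I_def by auto
    have fX: "finite X" using Xn finite_subset by blast
    have K1: "pairs X \<subseteq> K" unfolding K_def using Xn by (rule pairs_mono)
    have dis: "\<And>Y. Y \<in> J \<Longrightarrow> pairs X \<inter> pairs Y = {}"
      using J pairs_disj[OF fX] unfolding G_def by force
    show ?thesis unfolding M_def
    proof (rule eq_refl, rule Pi_indep[OF finK K1])
      show "\<And>f g. \<forall>e\<in>pairs X. f e = g e \<Longrightarrow> (f \<in> ev X) = (g \<in> ev X)" by (rule ev_dep)
      show "\<And>f g. \<forall>e. e \<notin> pairs X \<longrightarrow> f e = g e \<Longrightarrow> (f \<in> noev ev J) = (g \<in> noev ev J)"
      proof -
        fix f g :: "nat set \<Rightarrow> bool" assume fg: "\<forall>e. e \<notin> pairs X \<longrightarrow> f e = g e"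
        have "\<And>Y. Y \<in> J \<Longrightarrow> f \<in> ev Y \<longleftrightarrow> g \<in> ev Y"
        proof -
          fix Y assume "Y \<in> J"
          then have "\<forall>e\<in>pairs Y. f e = g e" using dis fg by blast
          then show "f \<in> ev Y \<longleftrightarrow> g \<in> ev Y" by (rule ev_dep)
        qed
        then show "(f \<in> noev ev J) = (g \<in> noev ev J)" unfolding noev_def by auto
      qed
    qed
  qed
  have xb: "\<And>X. X \<in> I \<Longrightarrow> 0 \<le> xv X \<and> xv X < 1" unfolding xv_def using x01 y01 by auto
  have pb: "measure_pmf.prob M (ev X) \<le> xv X * (\<Prod>Y\<in>G X \<inter> I. 1 - xv Y)" if XI: "X \<in> I" for X
  proof -
    have Xn: "X \<subseteq> {..<n}" using XI I_def by auto
    have fX: "finite X" using Xn finite_subset by blast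
    have K1: "pairs X \<subseteq> K" unfolding K_def using Xn by (rule pairs_mono)
    define Gs where "Gs = {Y. Y \<subseteq> {..<n} \<and> card Y = s \<and> 2 \<le> card (X \<inter> Y)}"
    define Gt where "Gt = {Y. Y \<subseteq> {..<n} \<and> card Y = t \<and> 2 \<le> card (X \<inter> Y)}"
    have GI: "G X \<inter> I = Gs \<union> Gt" unfolding G_def I_def Gs_def Gt_def by auto
    have fGs: "finite Gs" unfolding Gs_def by (rule finite_subset[of _ "Pow {..<n}"]) auto
    have fGt: "finite Gt" unfolding Gt_def by (rule finite_subset[of _ "Pow {..<n}"]) auto
    have disj: "Gs \<inter> Gt = {}" unfolding Gs_def Gt_def using st by auto
    have "(\<Prod>Y\<in>G X \<inter> I. 1 - xv Y) = (\<Prod>Y\<in>Gs. 1 - xv Y) * (\<Prod>Y\<in>Gt. 1 - xv Y)"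
      unfolding GI by (rule prod.union_disjoint[OF fGs fGt disj])
    also have "(\<Prod>Y\<in>Gs. 1 - xv Y) = (1 - x) ^ card Gs"
      unfolding xv_def Gs_def by simp
    also have "(\<Prod>Y\<in>Gt. 1 - xv Y) = (1 - y) ^ card Gt"
      unfolding xv_def Gt_def using st by simp
    finally have prodeq: "(\<Prod>Y\<in>G X \<inter> I. 1 - xv Y) = (1 - x) ^ card Gs * (1 - y) ^ card Gt" .
    have cGs: "card Gs \<le> (card X choose 2) * n ^ (s - 2)"
      unfolding Gs_def by (rule card_nbrs[OF fX s2])
    have cGt: "card Gt \<le> n choose t"
    proof -
      have "card Gt \<le> card {Y. Y \<subseteq> {..<n} \<and> card Y = t}"
        by (rule card_mono) (auto simp: Gt_def intro: finite_subset[of _ "Pow {..<n}"])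
      then show ?thesis using n_subsets[of "{..<n}" t] by simp
    qed
    have P1: "(1 - x) ^ ((card X choose 2) * n ^ (s - 2)) \<le> (1 - x) ^ card Gs"
      by (rule power_decreasing[OF cGs]) (use x01 in auto)
    have P2: "(1 - y) ^ (n choose t) \<le> (1 - y) ^ card Gt"
      by (rule power_decreasing[OF cGt]) (use y01 in auto)
    have prodge: "(1 - x) ^ ((card X choose 2) * n ^ (s - 2)) * (1 - y) ^ (n choose t)
        \<le> (\<Prod>Y\<in>G X \<inter> I. 1 - xv Y)"
      unfolding prodeq by (rule mult_mono[OF P1 P2]) (use x01 y01 in auto)
    have cp: "card (pairs X) = card X choose 2" by (rule card_pairs[OF fX])
    show ?thesis
    proof (cases "card X = s")
      case True
      have "measure_pmf.prob M (ev X) = measure_pmf.prob M {f. \<forall>e\<in>pairs X. f e = True}"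
        unfolding ev_def using True by simp
      also have "\<dots> = (\<Prod>e\<in>pairs X. pmf (bernoulli_pmf p) True)"
        unfolding M_def by (rule Pi_all[OF finK K1])
      also have "\<dots> = p ^ (s choose 2)" using p01 cp True by simp
      also have "\<dots> \<le> x * ((1 - x) ^ ((card X choose 2) * n ^ (s - 2)) * (1 - y) ^ (n choose t))"
        using H2 True by (simp add: mult.assoc)
      also have "\<dots> \<le> xv X * (\<Prod>Y\<in>G X \<inter> I. 1 - xv Y)"
      proof -
        have "xv X = x" unfolding xv_def using True by simp
        then show ?thesis using True x01 prodge by (simp add: mult_left_mono)
      qed
      finally show ?thesis .
    next
      case False
      then have cX: "card X = t" using XI I_def by auto
      have "measure_pmf.prob M (ev X) = measure_pmf.prob M {f. \<forall>e\<in>pairs X. f e = False}"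
        unfolding ev_def using False by simp
      also have "\<dots> = (\<Prod>e\<in>pairs X. pmf (bernoulli_pmf p) False)"
        unfolding M_def by (rule Pi_all[OF finK K1])
      also have "\<dots> = (1 - p) ^ (t choose 2)" using p01 cp cX by simp
      also have "\<dots> \<le> y * ((1 - x) ^ ((card X choose 2) * n ^ (s - 2)) * (1 - y) ^ (n choose t))"
        using H3 cX by (simp add: mult.assoc)
      also have "\<dots> \<le> xv X * (\<Prod>Y\<in>G X \<inter> I. 1 - xv Y)"
      proof -
        have "xv X = y" unfolding xv_def using False by simp
        then show ?thesis using cX y01 prodge by (simp add: mult_left_mono)
      qed
      finally show ?thesis .
    qed
  qed
  have "noev ev I \<noteq> {}" by (rule LLL[OF finI indep xb pb])
  then obtain w where w: "w \<in> noev ev I" by blast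
  show ?thesis
  proof (intro exI conjI allI impI)
    fix X assume "X \<subseteq> {..<n}" "card X = s"
    then have "X \<in> I" unfolding I_def by auto
    then have "w \<notin> ev X" using w unfolding noev_def by auto
    then show "\<not> (\<forall>e\<in>pairs X. w e)" using \<open>card X = s\<close> unfolding ev_def by auto
  next
    fix X assume "X \<subseteq> {..<n}" "card X = t"
    then have "X \<in> I" unfolding I_def by auto
    then have "w \<notin> ev X" using w unfolding noev_def by auto
    then show "\<not> (\<forall>e\<in>pairs X. \<not> w e)" using \<open>card X = t\<close> st unfolding ev_def by auto
  qed
qed



lemma greedy_stable:
  fixes E :: "nat \<Rightarrow> nat \<Rightarrow> bool" and d :: nat
  assumes sym: "\<And>u v. E u v \<Longrightarrow> E v u" and irr: "\<And>u. \<not> E u u"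
  shows "finite A \<Longrightarrow> (\<forall>v\<in>A. card {u\<in>A. E v u} < d) \<Longrightarrow>
     \<exists>S\<subseteq>A. (\<forall>u\<in>S. \<forall>v\<in>S. \<not> E u v) \<and> card A \<le> card S * d"
proof (induction "card A" arbitrary: A rule: less_induct)
  case less
  show ?case
  proof (cases "A = {}")
    case True then show ?thesis by auto
  next
    case False
    then obtain v where v: "v \<in> A" by blast
    define N where "N = {u\<in>A. E v u}"
    define A' where "A' = A - insert v N"
    have A'A: "A' \<subset> A" using v A'_def by auto
    have fA': "finite A'" using less.prems A'A finite_subset by blast
    have cA': "card A' < card A" using A'A less.prems psubset_card_mono by blast
    have degA': "\<forall>w\<in>A'. card {u\<in>A'. E w u} < d"
    proof
      fix w assume "w \<in> A'"
      then have "w \<in> A" using A'A by auto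
      have "card {u\<in>A'. E w u} \<le> card {u\<in>A. E w u}"
        by (rule card_mono) (use less.prems A'A in auto)
      then show "card {u\<in>A'. E w u} < d" using less.prems \<open>w \<in> A\<close> by fastforce
    qed
    obtain S' where S': "S' \<subseteq> A'" "\<forall>u\<in>S'. \<forall>w\<in>S'. \<not> E u w" "card A' \<le> card S' * d"
      using less.hyps[OF cA' fA' degA'] by blast
    define S where "S = insert v S'"
    have vS': "v \<notin> S'" using S'(1) A'_def by auto
    have fS': "finite S'" using S'(1) fA' finite_subset by blast
    have stab: "\<forall>u\<in>S. \<forall>w\<in>S. \<not> E u w"
    proof (intro ballI)
      fix u w assume "u \<in> S" "w \<in> S"
      have nv: "\<And>z. z \<in> S' \<Longrightarrow> \<not> E v z" using S'(1) A'_def N_def by auto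
      show "\<not> E u w"
        using \<open>u \<in> S\<close> \<open>w \<in> S\<close> S'(2) nv irr sym unfolding S_def by blast
    qed
    have cS: "card S = card S' + 1" using S_def vS' fS' by simp
    have "card A \<le> card A' + card (insert v N)"
    proof -
      have "A \<subseteq> A' \<union> insert v N" using A'_def by auto
      then have "card A \<le> card (A' \<union> insert v N)"
        by (rule card_mono[rotated]) (use less.prems A'_def N_def in auto)
      also have "\<dots> \<le> card A' + card (insert v N)" by (rule card_Un_le)
      finally show ?thesis .
    qed
    also have "card (insert v N) \<le> card N + 1" by (simp add: card_insert_le_m1)
    also have "card N < d" using less.prems v N_def by auto
    finally have "card A \<le> card A' + d" by simp
    then have "card A \<le> card S * d" using S'(3) cS by (simp add: algebra_simps)
    moreover have "S \<subseteq> A" using S'(1) v A'A S_def by auto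
    ultimately show ?thesis using stab by blast
  qed
qed

lemma many_edges:
  fixes E :: "nat \<Rightarrow> nat \<Rightarrow> bool"
  assumes sg: "simple_graph n E" and nost: "\<not> (\<exists>S. is_stable n E S \<and> card S = s)"
    and s2: "s \<ge> 2" and nbig: "4 * (s - 1) \<le> n"
  shows "real n ^ 2 \<le> 8 * (real s - 1) * real (card {(u,v). E u v})"
proof -
  have sym: "\<And>u v. E u v \<Longrightarrow> E v u" and irr: "\<And>u. \<not> E u u"
    and rng: "\<And>u v. E u v \<Longrightarrow> u < n \<and> v < n"
    using sg unfolding simple_graph_def by blast+
  define d where "d = n div (2 * (s - 1))"
  define A where "A = {v\<in>{..<n}. card {u. E v u} < d}"
  have fA: "finite A" unfolding A_def by auto
  have nbr_fin: "\<And>v. finite {u. E v u}" using rng by (metis (no_types, lifting) finite_nat_set_iff_bounded mem_Collect_eq)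
  have degA: "\<forall>v\<in>A. card {u\<in>A. E v u} < d"
  proof
    fix v assume "v \<in> A"
    have "card {u\<in>A. E v u} \<le> card {u. E v u}" by (rule card_mono[OF nbr_fin]) auto
    then show "card {u\<in>A. E v u} < d" using \<open>v \<in> A\<close> A_def by auto
  qed
  obtain S where S: "S \<subseteq> A" "\<forall>u\<in>S. \<forall>v\<in>S. \<not> E u v" "card A \<le> card S * d"
    using greedy_stable[OF sym irr fA degA] by blast
  have cS: "card S \<le> s - 1"
  proof (rule ccontr)
    assume "\<not> card S \<le> s - 1"
    then have "s \<le> card S" by simp
    then obtain T where T: "T \<subseteq> S" "card T = s" by (meson obtain_subset_with_card_n)
    have "is_stable n E T" unfolding is_stable_def using T S A_def by auto
    then show False using nost T by blast
  qed
  have cA: "card A \<le> (s - 1) * d"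
    using S(3) cS by (meson le_trans mult_le_mono1)
  have D: "card {(u,v). E u v} = (\<Sum>u<n. card {v. E u v})"
  proof -
    have "{(u,v). E u v} = Sigma {..<n} (\<lambda>u. {v. E u v})" using rng by auto
    then show ?thesis using nbr_fin by (simp add: card_SigmaI)
  qed
  have "(\<Sum>u<n. card {v. E u v}) \<ge> (\<Sum>u\<in>{..<n} - A. card {v. E u v})"
    by (rule sum_mono2) auto
  moreover have "(\<Sum>u\<in>{..<n} - A. card {v. E u v}) \<ge> (\<Sum>u\<in>{..<n} - A. d)"
    by (rule sum_mono) (auto simp: A_def)
  moreover have "(\<Sum>u\<in>{..<n} - A. d) = (n - card A) * d"
  proof -
    have "A \<subseteq> {..<n}" using A_def by auto
    then have "card ({..<n} - A) = n - card A" using fA by (simp add: card_Diff_subset)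
    then show ?thesis by simp
  qed
  ultimately have Dge: "card {(u,v). E u v} \<ge> (n - card A) * d" using D by linarith
  have s1: "real s - 1 > 0" using s2 by simp
  have rd1: "real (2 * (s - 1)) * real d \<le> real n"
  proof -
    have "2 * (s - 1) * d \<le> n" unfolding d_def by (simp add: mult.commute)
    then show ?thesis by (metis of_nat_le_iff of_nat_mult)
  qed
  have rd2: "real n < real (2 * (s - 1)) * (real d + 1)"
  proof -
    have pos: "0 < 2 * (s - 1)" using s2 by simp
    define m where "m = 2 * (s - 1)"
    have "n = m * d + n mod m" unfolding d_def m_def by simp
    moreover have "n mod m < m" using pos m_def by simp
    ultimately have "n < m * (d + 1)" by (metis add_mult_distrib2 nat_add_left_cancel_less nat_mult_1_right)
    then have "n < 2 * (s - 1) * (d + 1)" unfolding m_def .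
    then have "real n < real (2 * (s - 1) * (d + 1))" by (simp only: of_nat_less_iff)
    then show ?thesis by (simp only: of_nat_mult of_nat_add of_nat_1)
  qed
  have rs: "real (2 * (s - 1)) = 2 * (real s - 1)" using s2 by (simp add: of_nat_diff)
  have nb: "4 * (real s - 1) \<le> real n"
  proof -
    have "real (4 * (s - 1)) \<le> real n" using nbig by (simp only: of_nat_le_iff)
    then show ?thesis using s2 by (simp add: of_nat_diff)
  qed
  have dlow: "real d \<ge> real n / (4 * (real s - 1))"
  proof -
    have "real n < 2 * (real s - 1) * (real d + 1)" using rd2 unfolding rs .
    then have "real n / (2 * (real s - 1)) < real d + 1" using s1 by (simp add: field_simps)
    moreover have "real n / (4 * (real s - 1)) \<ge> 1" using nb s1 by simp
    moreover have "real n / (2 * (real s - 1)) = 2 * (real n / (4 * (real s - 1)))" using s1 by (simp add: field_simps)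
    ultimately show ?thesis
      by (smt (verit))
  qed
  have cAr: "real (card A) \<le> real n / 2"
  proof -
    have "real (card A) \<le> real ((s - 1) * d)" using cA by (simp only: of_nat_le_iff)
    then have "real (card A) \<le> (real s - 1) * real d" using s2 by (simp add: of_nat_diff)
    also have "\<dots> \<le> real n / 2" using rd1 unfolding rs by (simp add: algebra_simps)
    finally show ?thesis .
  qed
  have "real ((n - card A) * d) = (real n - real (card A)) * real d"
    using cAr by (simp add: of_nat_diff)
  also have "\<dots> \<ge> (real n / 2) * (real n / (4 * (real s - 1)))"
    using cAr dlow s1 by (intro mult_mono) auto
  finally have "real (card {(u,v). E u v}) \<ge> (real n / 2) * (real n / (4 * (real s - 1)))"
    using Dge by (meson of_nat_le_iff order_trans)
  then show ?thesis using s1 by (simp add: field_simps power2_eq_square)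
qed

lemma cover_bound:
  assumes cc: "clique_cover n E C" and small: "\<forall>X\<in>C. card X \<le> m"
  shows "card {(u,v). E u v} \<le> card C * m ^ 2"
proof -
  have Csub: "C \<subseteq> Pow {..<n}" using cc unfolding clique_cover_def is_clique_def by auto
  have fC: "finite C" using Csub finite_subset by blast
  have fX: "\<And>X. X \<in> C \<Longrightarrow> finite X" using Csub finite_subset by blast
  have "{(u,v). E u v} \<subseteq> (\<Union>X\<in>C. X \<times> X)" using cc unfolding clique_cover_def by blast
  then have "card {(u,v). E u v} \<le> card (\<Union>X\<in>C. X \<times> X)"
    by (rule card_mono[rotated]) (use fC fX in auto)
  also have "\<dots> \<le> (\<Sum>X\<in>C. card (X \<times> X))" by (rule card_UN_le[OF fC])
  also have "\<dots> \<le> (\<Sum>X\<in>C. m ^ 2)"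
    by (rule sum_mono) (use small in \<open>auto simp: card_cartesian_product power2_eq_square intro: mult_mono\<close>)
  also have "\<dots> = card C * m ^ 2" by simp
  finally show ?thesis .
qed


lemma final_alg:
  fixes N A K L S :: real
  assumes "A > 0" "K > 0" "L > 0" "S > 0"
  shows "1 / (512 * A ^ 2 * S) * (N / K ^ 2) / L ^ 2 = N / (8 * S * (8 * A * K * L) ^ 2)"
  using assms by (simp add: field_simps power2_eq_square)

lemma member_for_j:
  fixes s j :: nat
  assumes s3: "s \<ge> 3" and j1: "j \<ge> 1"
  defines "c \<equiv> 1 / (512 * (real (4 * s ^ 2))^2 * (real s - 1))"
  shows "(2::nat) ^ ((s + 1) * j) > 0 \<and> (\<exists>E. simple_graph (2 ^ ((s + 1) * j)) E \<and>
        \<not> (\<exists>S. is_stable (2 ^ ((s + 1) * j)) E S \<and> card S = s) \<and>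
        (\<forall>C. clique_cover (2 ^ ((s + 1) * j)) E C \<longrightarrow>
           c * real (2 ^ ((s + 1) * j)) powr (2 - 4 / (real s + 1)) / (log 2 (real (2 ^ ((s + 1) * j))))^2 \<le> real (card C)))"
proof -
  define k where "k = (2::nat) ^ j"
  define n where "n = (2::nat) ^ ((s + 1) * j)"
  define a where "a = 4 * s ^ 2"
  define p where "p = 1 / (real a * real k ^ 2)"
  define t where "t = 8 * a * k ^ 2 * (s + 1) * j"
  define x where "x = 4 * p ^ (s choose 2)"
  define y where "y = 2 * exp (- p * real (t choose 2) / 2)"
  have num: "0 \<le> p \<and> p \<le> 1 \<and> 0 \<le> x \<and> x < 1 \<and> 0 \<le> y \<and> y < 1 \<and> s \<noteq> t \<and> t \<ge> 2 \<and>
    p ^ (s choose 2) \<le> x * (1 - x) ^ ((s choose 2) * n ^ (s - 2)) * (1 - y) ^ (n choose t) \<and>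
    (1 - p) ^ (t choose 2) \<le> y * (1 - x) ^ ((t choose 2) * n ^ (s - 2)) * (1 - y) ^ (n choose t)"
    unfolding k_def n_def a_def p_def t_def x_def y_def by (rule numeric[OF s3 j1])
  obtain w where w1: "\<And>X. X \<subseteq> {..<n} \<Longrightarrow> card X = s \<Longrightarrow> \<not> (\<forall>e\<in>pairs X. w e)"
    and w2: "\<And>X. X \<subseteq> {..<n} \<Longrightarrow> card X = t \<Longrightarrow> \<not> (\<forall>e\<in>pairs X. \<not> w e)"
    using random_graph_exists[of p x y s t n] num s3 by auto
  define E where "E u v = (u < n \<and> v < n \<and> u \<noteq> v \<and> \<not> w {u, v})" for u v
  have sg: "simple_graph n E" unfolding simple_graph_def E_def by (auto simp: insert_commute)
  have pairs_el: "\<And>e X. e \<in> pairs X \<Longrightarrow> \<exists>u v. u \<in> X \<and> v \<in> X \<and> u \<noteq> v \<and> e = {u, v}"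
    unfolding pairs_def by (auto simp: card_2_iff)
  have nost: "\<not> (\<exists>S. is_stable n E S \<and> card S = s)"
  proof
    assume "\<exists>S. is_stable n E S \<and> card S = s"
    then obtain S where S: "is_stable n E S" "card S = s" by blast
    have Sn: "S \<subseteq> {..<n}" using S unfolding is_stable_def by auto
    have "\<forall>e\<in>pairs S. w e"
    proof
      fix e assume "e \<in> pairs S"
      then obtain u v where uv: "u \<in> S" "v \<in> S" "u \<noteq> v" "e = {u, v}" using pairs_el by blast
      then have "\<not> E u v" using S unfolding is_stable_def by auto
      then show "w e" using uv Sn unfolding E_def by auto
    qed
    then show False using w1[OF Sn S(2)] by blast
  qed
  have small: "\<forall>X\<in>C. card X \<le> t" if cc: "clique_cover n E C" for C
  proof
    fix X assume XC: "X \<in> C"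
    then have cl: "is_clique n E X" using cc unfolding clique_cover_def by auto
    show "card X \<le> t"
    proof (rule ccontr)
      assume "\<not> card X \<le> t"
      then obtain T where T: "T \<subseteq> X" "card T = t" by (meson nat_le_linear obtain_subset_with_card_n)
      have Tn: "T \<subseteq> {..<n}" using T cl unfolding is_clique_def by auto
      have "\<forall>e\<in>pairs T. \<not> w e"
      proof
        fix e assume "e \<in> pairs T"
        then obtain u v where uv: "u \<in> T" "v \<in> T" "u \<noteq> v" "e = {u, v}" using pairs_el by blast
        then have "E u v" using cl T unfolding is_clique_def by auto
        then show "\<not> w e" using uv unfolding E_def by auto
      qed
      then show False using w2[OF Tn T(2)] by blast
    qed
  qed
  have nbig: "4 * (s - 1) \<le> n"
  proof -
    have "s - 1 < 2 ^ (s - 1)" by (rule less_exp)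
    then have "4 * (s - 1) \<le> 4 * 2 ^ (s - 1)" by simp
    also have "4 * 2 ^ (s - 1) = (2::nat) ^ (s + 1)" using s3
      by (metis Suc_diff_le add_2_eq_Suc' diff_Suc_1 le_trans one_le_numeral numeral_le_iff semiring_norm(69) power_add power_Suc2 mult.commute numeral_3_eq_3 Suc_leD plus_1_eq_Suc add.commute power2_eq_square numeral_Bit0 mult_2_right)
    also have "\<dots> \<le> 2 ^ ((s + 1) * j)"
    proof (rule power_increasing)
      show "s + 1 \<le> (s + 1) * j" using j1 by (metis mult_le_mono2 mult_1_right)
    qed simp
    finally show ?thesis unfolding n_def .
  qed
  have edges: "real n ^ 2 \<le> 8 * (real s - 1) * real (card {(u,v). E u v})"
    by (rule many_edges[OF sg nost _ nbig]) (use s3 in auto)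
  have kpos: "real k > 0" unfolding k_def by simp
  have nk0: "n = k ^ (s + 1)" unfolding n_def k_def by (simp only: power_mult[symmetric] mult.commute)
  have nk: "real n = real k ^ (s + 1)" unfolding nk0 by simp
  have npow: "real n powr (2 - 4 / (real s + 1)) = real n ^ 2 / real k ^ 4"
  proof -
    have "real n powr (2 - 4 / (real s + 1)) = real n powr 2 / real n powr (4 / (real s + 1))"
      by (rule powr_diff)
    also have "real n powr 2 = real n ^ 2"
    proof -
      have npos: "real n > 0" unfolding n_def by simp
      show ?thesis using powr_realpow[OF npos, of 2] by simp
    qed
    also have "real n powr (4 / (real s + 1)) = real k ^ 4"
    proof -
      have "real k powr (real (s + 1)) = real k ^ (s + 1)" by (rule powr_realpow[OF kpos])
      then have "real n = real k powr (real s + 1)" using nk by (simp add: add.commute)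
      then have "real n powr (4 / (real s + 1)) = real k powr ((real s + 1) * (4 / (real s + 1)))"
        by (simp add: powr_powr)
      also have "(real s + 1) * (4 / (real s + 1)) = 4"
      proof -
        have sp: "real s + 1 > 0" by simp
        then show ?thesis by (simp add: field_simps)
      qed
      also have "real k powr 4 = real k ^ 4" using powr_realpow[OF kpos, of 4] by simp
      finally show ?thesis .
    qed
    finally show ?thesis .
  qed
  have nlog: "log 2 (real n) = (real s + 1) * real j"
    unfolding n_def by (simp add: log_nat_power algebra_simps)
  show ?thesis
  proof (intro conjI exI[of _ E] allI impI)
    show "(2::nat) ^ ((s + 1) * j) > 0" by simp
    show "simple_graph (2 ^ ((s + 1) * j)) E" using sg unfolding n_def .
    show "\<not> (\<exists>S. is_stable (2 ^ ((s + 1) * j)) E S \<and> card S = s)" using nost unfolding n_def .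
    fix C assume cc0: "clique_cover (2 ^ ((s + 1) * j)) E C"
    then have cc: "clique_cover n E C" unfolding n_def .
    have D: "card {(u,v). E u v} \<le> card C * t ^ 2" by (rule cover_bound[OF cc small[OF cc]])
    then have Dr: "real (card {(u,v). E u v}) \<le> real (card C) * real t ^ 2"
      by (metis of_nat_le_iff of_nat_mult of_nat_power)
    have s1: "real s - 1 > 0" using s3 by simp
    have key: "real n ^ 2 \<le> 8 * (real s - 1) * real t ^ 2 * real (card C)"
    proof -
      have "8 * (real s - 1) * real (card {(u,v). E u v}) \<le> 8 * (real s - 1) * (real (card C) * real t ^ 2)"
        using Dr s1 by (intro mult_left_mono) auto
      then show ?thesis using edges by (simp add: algebra_simps)
    qed
    have tr: "real t = 8 * real a * real k ^ 2 * ((real s + 1) * real j)" unfolding t_def by (simp add: algebra_simps)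
    have jpos: "real j > 0" using j1 by simp
    have apos: "real a > 0" unfolding a_def using s3 by simp
    have "c * real n powr (2 - 4 / (real s + 1)) / (log 2 (real n))^2
        = real n ^ 2 / (8 * (real s - 1) * real t ^ 2)"
    proof -
      have k4: "real k ^ 4 = (real k ^ 2) ^ 2" by simp
      show ?thesis unfolding npow nlog c_def tr a_def[symmetric] k4
        by (rule final_alg) (use s1 kpos jpos apos in auto)
    qed
    also have "\<dots> \<le> real (card C)"
    proof -
      have "8 * (real s - 1) * real t ^ 2 > 0" using s1 tr kpos jpos apos by simp
      then show ?thesis using key by (simp add: field_simps)
    qed
    finally show "c * real (2 ^ ((s + 1) * j)) powr (2 - 4 / (real s + 1)) / (log 2 (real (2 ^ ((s + 1) * j))))^2 \<le> real (card C)"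
      unfolding n_def by simp
  qed
qed

theorem mainTheorem10:
  fixes s :: nat
  assumes "s \<ge> 3"
  shows "\<exists>c::real. c > 0 \<and>
    infinite {n::nat. n > 0 \<and> (\<exists>E. simple_graph n E \<and>
        \<not> (\<exists>S. is_stable n E S \<and> card S = s) \<and>
        (\<forall>C. clique_cover n E C \<longrightarrow>
           c * real n powr (2 - 4 / (real s + 1)) / (log 2 (real n))^2 \<le> real (card C)))}"
proof (intro exI conjI)
  define c where "c = 1 / (512 * (real (4 * s ^ 2))^2 * (real s - 1))"
  show "c > 0" unfolding c_def using assms by simp
  show "infinite {n::nat. n > 0 \<and> (\<exists>E. simple_graph n E \<and>
        \<not> (\<exists>S. is_stable n E S \<and> card S = s) \<and>
        (\<forall>C. clique_cover n E C \<longrightarrow>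
           c * real n powr (2 - 4 / (real s + 1)) / (log 2 (real n))^2 \<le> real (card C)))}"
    (is "infinite ?S")
  proof -
    have mem: "(2::nat) ^ ((s + 1) * j) \<in> ?S" if "j \<ge> 1" for j
      using member_for_j[OF assms that] unfolding c_def by blast
    show ?thesis unfolding infinite_nat_iff_unbounded_le
    proof
      fix m
      have "m < 2 ^ m" by (rule less_exp)
      also have "(2::nat) ^ m \<le> 2 ^ ((s + 1) * (m + 1))" by (rule power_increasing) auto
      finally have "m \<le> 2 ^ ((s + 1) * (m + 1))" by simp
      moreover have "(2::nat) ^ ((s + 1) * (m + 1)) \<in> ?S" by (rule mem) simp
      ultimately show "\<exists>n\<ge>m. n \<in> ?S" by blast
    qed
  qed
qed

end
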